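(* Let $C_{\max}(x)\in\arg\max_{C\in\mathcal I}p_C(x)$ (ties broken in favor of the larger weight $w(C)$), and set $D_G(x)=\mathbb 1\{T(x)\ge 1-\alpha\}$ and $C_G(x)=C_{\max}(x)$. Then $(D_G,C_G)$ is a feasible policy (i.e. $mFCR(D_G,C_G)\le\alpha$) that minimizes $G(D,C)$. Moreover, if $\mathbb P(T(X)>1-\alpha)=0$, then $(D_G,C_G)$ is an optimal solution of the problem of maximizing $\Pi(D,C)$ over all $D:\mathcal X\to\{0,1\}$, $C:\mathcal X\to\mathcal I$ subject to $mFCR(D,C)\le\alpha$.
   Context: Let $(X,Y)\sim P_{XY}$ on $\mathcal X\times\mathcal Y$, $\alpha\in(0,1)$, $\mathcal I$ a finite collection of subsets of $\mathcal Y$, $w:\mathcal I\to(0,B)$ a bounded positive weight. For $C\in\mathcal I$ let $p_C(x)=\mathbb P(Y\in C\mid X=x)$ and $T(x)=\max_{C\in\mathcal I}p_C(x)$. For $D:\mathcal X\to\{0,1\}$, $C:\mathcal X\to\mathcal I$: $\Pi(D,C)=\mathbb E[w(C(X))p_{C(X)}(X)D(X)]$, $G(D,C)=\mathbb E[(1-p_{C(X)}(X)-\alpha)D(X)]$, and $mFCR(D,C)=\frac{\mathbb E[\mathbb 1\{Y\notin C(X)\}D(X)]}{\mathbb E[D(X)]}$ with the convention that it is $0$ if $\mathbb E[D(X)]=0$. *)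

theory Defs
  imports "HOL-Probability.Probability"
begin

text \<open>Expectations are taken w.r.t. the probability measure M on the sample space,
  X and Y being random variables with values in the measurable spaces MX and MY.
  p C x plays the role of P(Y in C | X = x).\<close>

definition Pi_obj :: "'a measure \<Rightarrow> ('a \<Rightarrow> 'x) \<Rightarrow> ('y set \<Rightarrow> real) \<Rightarrow> ('y set \<Rightarrow> 'x \<Rightarrow> real)
    \<Rightarrow> ('x \<Rightarrow> bool) \<Rightarrow> ('x \<Rightarrow> 'y set) \<Rightarrow> real" where
  "Pi_obj M X w p D C =
     (\<integral>\<omega>. w (C (X \<omega>)) * p (C (X \<omega>)) (X \<omega>) * of_bool (D (X \<omega>)) \<partial>M)"

definition G_obj :: "'a measure \<Rightarrow> ('a \<Rightarrow> 'x) \<Rightarrow> ('y set \<Rightarrow> 'x \<Rightarrow> real) \<Rightarrow> real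
    \<Rightarrow> ('x \<Rightarrow> bool) \<Rightarrow> ('x \<Rightarrow> 'y set) \<Rightarrow> real" where
  "G_obj M X p \<alpha> D C =
     (\<integral>\<omega>. (1 - p (C (X \<omega>)) (X \<omega>) - \<alpha>) * of_bool (D (X \<omega>)) \<partial>M)"

definition mFCR :: "'a measure \<Rightarrow> ('a \<Rightarrow> 'x) \<Rightarrow> ('a \<Rightarrow> 'y)
    \<Rightarrow> ('x \<Rightarrow> bool) \<Rightarrow> ('x \<Rightarrow> 'y set) \<Rightarrow> real" where
  "mFCR M X Y D C =
     (let den = (\<integral>\<omega>. of_bool (D (X \<omega>)) \<partial>M) in
      if den = 0 then 0
      else (\<integral>\<omega>. of_bool (Y \<omega> \<notin> C (X \<omega>) \<and> D (X \<omega>)) \<partial>M) / den)"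

definition policy :: "'x measure \<Rightarrow> 'y set set \<Rightarrow> ('x \<Rightarrow> bool) \<Rightarrow> ('x \<Rightarrow> 'y set) \<Rightarrow> bool" where
  "policy MX I D C \<longleftrightarrow> D \<in> measurable MX (count_space UNIV) \<and> C \<in> measurable MX (count_space I)"

definition Tmax :: "'y set set \<Rightarrow> ('y set \<Rightarrow> 'x \<Rightarrow> real) \<Rightarrow> 'x \<Rightarrow> real" where
  "Tmax I p x = Max ((\<lambda>C. p C x) ` I)"

end

theory Submission
  imports Defs
begin

lemma (in finite_measure) bnd_int:
  fixes f :: "'a \<Rightarrow> real"
  assumes "f \<in> borel_measurable M" "\<And>\<omega>. \<omega> \<in> space M \<Longrightarrow> \<bar>f \<omega>\<bar> \<le> K"
  shows "integrable M f"
  using assms by (intro integrable_const_bound[where B=K]) (auto intro!: AE_I2)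

lemma aux_bnd:
  fixes a q B :: real
  assumes "0 < a" "a < B" "0 \<le> q" "q \<le> 1"
  shows "\<bar>a\<bar> * q \<le> B"
proof -
  have "a * q \<le> a" using mult_left_le[of q a] assms by auto
  moreover have "\<bar>a\<bar> = a" using assms by simp
  ultimately show ?thesis using assms by (simp only:)
qed

lemma sum_of_bool_eq:
  fixes h :: "'c \<Rightarrow> real"
  assumes "finite I" "a \<in> I"
  shows "(\<Sum>c\<in>I. of_bool (a = c) * h c) = h a"
proof -
  have "(\<Sum>c\<in>I. of_bool (a = c) * h c) = (\<Sum>c\<in>I. if a = c then h c else 0)"
    by (intro sum.cong) auto
  also have "\<dots> = h a" using assms by (simp add: sum.delta)
  finally show ?thesis .
qed

lemma (in finite_measure) split_I:
  fixes f :: "'c \<Rightarrow> 'a \<Rightarrow> real"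
  assumes I: "finite I" and g: "g \<in> measurable M (count_space I)"
    and fm: "\<And>c. c \<in> I \<Longrightarrow> f c \<in> borel_measurable M"
    and fb: "\<And>c \<omega>. c \<in> I \<Longrightarrow> \<omega> \<in> space M \<Longrightarrow> \<bar>f c \<omega>\<bar> \<le> K"
  shows "(\<integral>\<omega>. f (g \<omega>) \<omega> \<partial>M) = (\<Sum>c\<in>I. \<integral>\<omega>. of_bool (g \<omega> = c) * f c \<omega> \<partial>M)"
proof -
  have gm: "c \<in> I \<Longrightarrow> (\<lambda>\<omega>. of_bool (g \<omega> = c) :: real) \<in> borel_measurable M" for c
  proof -
    have "(\<lambda>i. of_bool (i = c) :: real) \<in> measurable (count_space I) borel" by simp
    from measurable_compose[OF g this] show ?thesis by (simp add: comp_def)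
  qed
  have int: "c \<in> I \<Longrightarrow> integrable M (\<lambda>\<omega>. of_bool (g \<omega> = c) * f c \<omega>)" for c
    by (rule bnd_int[where K=K]) (use gm fm fb in \<open>auto, meson abs_ge_zero order_trans\<close>)
  have "(\<Sum>c\<in>I. \<integral>\<omega>. of_bool (g \<omega> = c) * f c \<omega> \<partial>M) = (\<integral>\<omega>. (\<Sum>c\<in>I. of_bool (g \<omega> = c) * f c \<omega>) \<partial>M)"
    by (subst Bochner_Integration.integral_sum) (auto intro: int)
  also have "\<dots> = (\<integral>\<omega>. f (g \<omega>) \<omega> \<partial>M)"
    apply (rule Bochner_Integration.integral_cong[OF refl])
    apply (rule sum_of_bool_eq[OF I])
    using measurable_space[OF g] by simp
  finally show ?thesis by simp
qed

theorem proposition11: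
  fixes M :: "'a measure" and MX :: "'x measure" and MY :: "'y measure"
    and X :: "'a \<Rightarrow> 'x" and Y :: "'a \<Rightarrow> 'y"
    and I :: "'y set set" and w :: "'y set \<Rightarrow> real" and B :: real
    and p :: "'y set \<Rightarrow> 'x \<Rightarrow> real" and \<alpha> :: real
    and Cmax :: "'x \<Rightarrow> 'y set"
  assumes "prob_space M"
    and X_rv: "X \<in> measurable M MX" and Y_rv: "Y \<in> measurable M MY"
    and alpha: "0 < \<alpha>" "\<alpha> < 1"
    and I_fin: "finite I" and I_ne: "I \<noteq> {}" and I_sets: "I \<subseteq> sets MY"
    and w_pos: "\<And>C. C \<in> I \<Longrightarrow> 0 < w C \<and> w C < B"
    and p_meas: "\<And>C. C \<in> I \<Longrightarrow> p C \<in> borel_measurable MX"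
    and p_range: "\<And>C x. C \<in> I \<Longrightarrow> x \<in> space MX \<Longrightarrow> 0 \<le> p C x \<and> p C x \<le> 1"
    and p_cond: "\<And>C A. C \<in> I \<Longrightarrow> A \<in> sets MX \<Longrightarrow>
        measure M {\<omega> \<in> space M. X \<omega> \<in> A \<and> Y \<omega> \<in> C}
          = (\<integral>\<omega>. indicator A (X \<omega>) * p C (X \<omega>) \<partial>M)"
    and Cmax_in: "\<And>x. x \<in> space MX \<Longrightarrow> Cmax x \<in> I"
    and Cmax_arg: "\<And>x. x \<in> space MX \<Longrightarrow> p (Cmax x) x = Tmax I p x"
    and Cmax_tie: "\<And>x C. x \<in> space MX \<Longrightarrow> C \<in> I \<Longrightarrow> p C x = Tmax I p x \<Longrightarrow> w C \<le> w (Cmax x)"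
    and Cmax_meas: "Cmax \<in> measurable MX (count_space I)"
  shows "policy MX I (\<lambda>x. Tmax I p x \<ge> 1 - \<alpha>) Cmax
       \<and> mFCR M X Y (\<lambda>x. Tmax I p x \<ge> 1 - \<alpha>) Cmax \<le> \<alpha>
       \<and> (\<forall>D C. policy MX I D C \<longrightarrow>
            G_obj M X p \<alpha> (\<lambda>x. Tmax I p x \<ge> 1 - \<alpha>) Cmax \<le> G_obj M X p \<alpha> D C)
       \<and> (measure M {\<omega> \<in> space M. Tmax I p (X \<omega>) > 1 - \<alpha>} = 0 \<longrightarrow>
            (\<forall>D C. policy MX I D C \<and> mFCR M X Y D C \<le> \<alpha> \<longrightarrow>
               Pi_obj M X w p D C \<le> Pi_obj M X w p (\<lambda>x. Tmax I p x \<ge> 1 - \<alpha>) Cmax))"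
proof -
  interpret prob_space M by fact
  have Xs: "\<And>\<omega>. \<omega> \<in> space M \<Longrightarrow> X \<omega> \<in> space MX" using measurable_space[OF X_rv] .
  have Tge: "\<And>x c. x \<in> space MX \<Longrightarrow> c \<in> I \<Longrightarrow> p c x \<le> Tmax I p x"
    unfolding Tmax_def using I_fin by (intro Max_ge) auto
  have Tin: "\<And>x. x \<in> space MX \<Longrightarrow> 0 \<le> Tmax I p x \<and> Tmax I p x \<le> 1"
    using Cmax_arg Cmax_in p_range by metis
  have Tm[measurable]: "Tmax I p \<in> borel_measurable MX"
    unfolding Tmax_def[abs_def] by (rule borel_measurable_Max[OF I_fin p_meas])
  have pCm: "\<And>C. C \<in> measurable MX (count_space I) \<Longrightarrow> (\<lambda>x. p (C x) x) \<in> borel_measurable MX"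
    by (rule measurable_compose_countable'[OF p_meas]) (auto simp: countable_finite I_fin)
  have wCm: "\<And>C. C \<in> measurable MX (count_space I) \<Longrightarrow> (\<lambda>x. w (C x)) \<in> borel_measurable MX"
    by (rule measurable_compose_countable'[where f="\<lambda>c x. w c"]) (auto simp: countable_finite I_fin)
  have Dm: "\<And>D. D \<in> measurable MX (count_space UNIV) \<Longrightarrow> (\<lambda>x. of_bool (D x) :: real) \<in> borel_measurable MX"
  proof -
    fix D :: "'x \<Rightarrow> bool" assume "D \<in> measurable MX (count_space UNIV)"
    moreover have "(of_bool :: bool \<Rightarrow> real) \<in> measurable (count_space UNIV) borel" by simp
    ultimately show "(\<lambda>x. of_bool (D x) :: real) \<in> borel_measurable MX"
      using measurable_compose by (auto simp: comp_def)
  qed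
  have DGm: "(\<lambda>x. 1 - \<alpha> \<le> Tmax I p x) \<in> measurable MX (count_space UNIV)"
    by measurable
  have Ym: "\<And>c. c \<in> I \<Longrightarrow> (\<lambda>\<omega>. of_bool (Y \<omega> \<in> c) :: real) \<in> borel_measurable M"
  proof -
    fix c assume "c \<in> I"
    then have "(\<lambda>\<omega>. indicator c (Y \<omega>) :: real) \<in> borel_measurable M"
      using I_sets by (intro measurable_compose[OF Y_rv borel_measurable_indicator]) auto
    then show "(\<lambda>\<omega>. of_bool (Y \<omega> \<in> c) :: real) \<in> borel_measurable M"
      by (simp add: indicator_def)
  qed
  have num: "(\<integral>\<omega>. of_bool (Y \<omega> \<notin> C (X \<omega>) \<and> D (X \<omega>)) \<partial>M)
      = (\<integral>\<omega>. (1 - p (C (X \<omega>)) (X \<omega>)) * of_bool (D (X \<omega>)) \<partial>M)"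
    if pol: "policy MX I D C" for D C
  proof -
    have Dm0: "D \<in> measurable MX (count_space UNIV)" and Cm0: "C \<in> measurable MX (count_space I)"
      using pol by (auto simp: policy_def)
    have gm: "(\<lambda>\<omega>. C (X \<omega>)) \<in> measurable M (count_space I)"
      using measurable_compose[OF X_rv Cm0] by (simp add: comp_def)
    have dm: "(\<lambda>\<omega>. of_bool (D (X \<omega>)) :: real) \<in> borel_measurable M"
      using measurable_compose[OF X_rv Dm[OF Dm0]] by (simp add: comp_def)
    have pXm: "c \<in> I \<Longrightarrow> (\<lambda>\<omega>. p c (X \<omega>)) \<in> borel_measurable M" for c
      using measurable_compose[OF X_rv p_meas[of c]] by (simp add: comp_def)
    have em: "c \<in> I \<Longrightarrow> (\<lambda>\<omega>. of_bool (C (X \<omega>) = c) :: real) \<in> borel_measurable M" for c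
    proof -
      have "(\<lambda>i. of_bool (i = c) :: real) \<in> measurable (count_space I) borel" by simp
      from measurable_compose[OF gm this] show ?thesis by (simp add: comp_def)
    qed
    have "(\<integral>\<omega>. of_bool (Y \<omega> \<notin> C (X \<omega>) \<and> D (X \<omega>)) \<partial>M)
        = (\<integral>\<omega>. (\<lambda>c \<omega>. (of_bool (D (X \<omega>)) :: real) * (1 - of_bool (Y \<omega> \<in> c))) (C (X \<omega>)) \<omega> \<partial>M)"
      by (intro Bochner_Integration.integral_cong) auto
    also have "\<dots> = (\<Sum>c\<in>I. \<integral>\<omega>. (of_bool (C (X \<omega>) = c)::real) * (of_bool (D (X \<omega>)) * (1 - of_bool (Y \<omega> \<in> c))) \<partial>M)"
      by (rule split_I[OF I_fin gm, where K=1]) (auto intro!: borel_measurable_times borel_measurable_diff dm Ym)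
    also have "\<dots> = (\<Sum>c\<in>I. \<integral>\<omega>. (of_bool (C (X \<omega>) = c)::real) * ((1 - p c (X \<omega>)) * of_bool (D (X \<omega>))) \<partial>M)"
    proof (rule sum.cong[OF refl])
      fix c assume c: "c \<in> I"
      define A where "A = {x \<in> space MX. D x \<and> C x = c}"
      have A1: "D -` {True} \<inter> space MX \<in> sets MX" using measurable_sets[OF Dm0, of "{True}"] by simp
      have A2: "C -` {c} \<inter> space MX \<in> sets MX" using measurable_sets[OF Cm0, of "{c}"] c by simp
      have "A = (D -` {True} \<inter> space MX) \<inter> (C -` {c} \<inter> space MX)" unfolding A_def by auto
      then have A: "A \<in> sets MX" using A1 A2 by auto
      have int1: "integrable M (\<lambda>\<omega>. (of_bool (C (X \<omega>) = c)::real) * of_bool (D (X \<omega>)))"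
        by (rule bnd_int[where K=1]) (auto intro!: borel_measurable_times em[OF c] dm)
      have int2: "integrable M (\<lambda>\<omega>. (of_bool (C (X \<omega>) = c)::real) * of_bool (D (X \<omega>)) * of_bool (Y \<omega> \<in> c))"
        by (rule bnd_int[where K=1]) (auto intro!: borel_measurable_times em[OF c] dm Ym[OF c])
      have int3: "integrable M (\<lambda>\<omega>. (of_bool (C (X \<omega>) = c)::real) * of_bool (D (X \<omega>)) * p c (X \<omega>))"
        by (rule bnd_int[where K=1]) (auto intro!: borel_measurable_times em[OF c] dm pXm[OF c] simp: abs_le_iff dest: p_range[OF c Xs])
      have "(\<integral>\<omega>. (of_bool (C (X \<omega>) = c)::real) * of_bool (D (X \<omega>)) * of_bool (Y \<omega> \<in> c) \<partial>M)
          = (\<integral>\<omega>. indicator {\<omega> \<in> space M. X \<omega> \<in> A \<and> Y \<omega> \<in> c} \<omega> \<partial>M)"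
        by (intro Bochner_Integration.integral_cong) (auto simp: A_def Xs indicator_def)
      also have "\<dots> = measure M {\<omega> \<in> space M. X \<omega> \<in> A \<and> Y \<omega> \<in> c}"
        by (simp add: Int_absorb2 subset_iff)
      also have "\<dots> = (\<integral>\<omega>. indicator A (X \<omega>) * p c (X \<omega>) \<partial>M)"
        by (rule p_cond[OF c A])
      also have "\<dots> = (\<integral>\<omega>. (of_bool (C (X \<omega>) = c)::real) * of_bool (D (X \<omega>)) * p c (X \<omega>) \<partial>M)"
        by (intro Bochner_Integration.integral_cong) (auto simp: A_def Xs indicator_def)
      finally have key: "(\<integral>\<omega>. (of_bool (C (X \<omega>) = c)::real) * of_bool (D (X \<omega>)) * of_bool (Y \<omega> \<in> c) \<partial>M)
          = (\<integral>\<omega>. (of_bool (C (X \<omega>) = c)::real) * of_bool (D (X \<omega>)) * p c (X \<omega>) \<partial>M)" .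
      have "(\<integral>\<omega>. (of_bool (C (X \<omega>) = c)::real) * (of_bool (D (X \<omega>)) * (1 - of_bool (Y \<omega> \<in> c))) \<partial>M)
          = (\<integral>\<omega>. (of_bool (C (X \<omega>) = c)::real) * of_bool (D (X \<omega>)) - (of_bool (C (X \<omega>) = c)::real) * of_bool (D (X \<omega>)) * of_bool (Y \<omega> \<in> c) \<partial>M)"
        by (intro Bochner_Integration.integral_cong) (auto simp: algebra_simps)
      also have "\<dots> = (\<integral>\<omega>. (of_bool (C (X \<omega>) = c)::real) * of_bool (D (X \<omega>)) \<partial>M) - (\<integral>\<omega>. (of_bool (C (X \<omega>) = c)::real) * of_bool (D (X \<omega>)) * of_bool (Y \<omega> \<in> c) \<partial>M)"
        by (rule Bochner_Integration.integral_diff[OF int1 int2])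
      also have "\<dots> = (\<integral>\<omega>. (of_bool (C (X \<omega>) = c)::real) * of_bool (D (X \<omega>)) \<partial>M) - (\<integral>\<omega>. (of_bool (C (X \<omega>) = c)::real) * of_bool (D (X \<omega>)) * p c (X \<omega>) \<partial>M)"
        by (simp only: key)
      also have "\<dots> = (\<integral>\<omega>. (of_bool (C (X \<omega>) = c)::real) * of_bool (D (X \<omega>)) - (of_bool (C (X \<omega>) = c)::real) * of_bool (D (X \<omega>)) * p c (X \<omega>) \<partial>M)"
        by (rule Bochner_Integration.integral_diff[OF int1 int3, symmetric])
      also have "\<dots> = (\<integral>\<omega>. (of_bool (C (X \<omega>) = c)::real) * ((1 - p c (X \<omega>)) * of_bool (D (X \<omega>))) \<partial>M)"
        by (intro Bochner_Integration.integral_cong) (auto simp: algebra_simps)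
      finally show "(\<integral>\<omega>. (of_bool (C (X \<omega>) = c)::real) * (of_bool (D (X \<omega>)) * (1 - of_bool (Y \<omega> \<in> c))) \<partial>M)
          = (\<integral>\<omega>. (of_bool (C (X \<omega>) = c)::real) * ((1 - p c (X \<omega>)) * of_bool (D (X \<omega>))) \<partial>M)" .
    qed
    also have "\<dots> = (\<integral>\<omega>. (\<lambda>c \<omega>. (1 - p c (X \<omega>)) * of_bool (D (X \<omega>))) (C (X \<omega>)) \<omega> \<partial>M)"
      by (rule split_I[OF I_fin gm, where K=1, symmetric])
         (auto intro!: borel_measurable_times borel_measurable_diff dm pXm simp: abs_le_iff dest: p_range[OF _ Xs])
    finally show ?thesis by simp
  qed
  have pf: "(\<lambda>\<omega>. of_bool (D (X \<omega>))::real) \<in> borel_measurable M \<and> (\<lambda>\<omega>. p (C (X \<omega>)) (X \<omega>)) \<in> borel_measurable M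
      \<and> (\<lambda>\<omega>. w (C (X \<omega>))) \<in> borel_measurable M
      \<and> (\<forall>\<omega>\<in>space M. C (X \<omega>) \<in> I \<and> 0 \<le> p (C (X \<omega>)) (X \<omega>) \<and> p (C (X \<omega>)) (X \<omega>) \<le> 1
          \<and> 0 < w (C (X \<omega>)) \<and> w (C (X \<omega>)) < B)"
    if pol: "policy MX I D C" for D C
  proof -
    have Dm0: "D \<in> measurable MX (count_space UNIV)" and Cm0: "C \<in> measurable MX (count_space I)"
      using pol by (auto simp: policy_def)
    have CI: "\<omega> \<in> space M \<Longrightarrow> C (X \<omega>) \<in> I" for \<omega>
      using measurable_space[OF Cm0 Xs] by simp
    show ?thesis
      using measurable_compose[OF X_rv Dm[OF Dm0]] measurable_compose[OF X_rv pCm[OF Cm0]]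
        measurable_compose[OF X_rv wCm[OF Cm0]] CI p_range[OF CI Xs] w_pos[OF CI]
      by (simp add: comp_def)
  qed
  have polG: "policy MX I (\<lambda>x. Tmax I p x \<ge> 1 - \<alpha>) Cmax"
    by (simp add: policy_def DGm Cmax_meas)
  have TX: "(\<lambda>\<omega>. Tmax I p (X \<omega>)) \<in> borel_measurable M"
    using measurable_compose[OF X_rv Tm] by (simp add: comp_def)
  note pG = pf[OF polG]
  have TCm: "\<omega> \<in> space M \<Longrightarrow> p (Cmax (X \<omega>)) (X \<omega>) = Tmax I p (X \<omega>)" for \<omega>
    using Cmax_arg Xs by simp
  have part2: "mFCR M X Y (\<lambda>x. Tmax I p x \<ge> 1 - \<alpha>) Cmax \<le> \<alpha>"
  proof -
    define den where "den = (\<integral>\<omega>. (of_bool (Tmax I p (X \<omega>) \<ge> 1 - \<alpha>)::real) \<partial>M)"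
    have den0: "den \<ge> 0" unfolding den_def by simp
    have "(\<integral>\<omega>. of_bool (Y \<omega> \<notin> Cmax (X \<omega>) \<and> Tmax I p (X \<omega>) \<ge> 1 - \<alpha>) \<partial>M)
        = (\<integral>\<omega>. (1 - p (Cmax (X \<omega>)) (X \<omega>)) * of_bool (Tmax I p (X \<omega>) \<ge> 1 - \<alpha>) \<partial>M)"
      using num[OF polG] by simp
    also have "\<dots> \<le> (\<integral>\<omega>. \<alpha> * of_bool (Tmax I p (X \<omega>) \<ge> 1 - \<alpha>) \<partial>M)"
    proof (rule integral_mono)
      show "integrable M (\<lambda>\<omega>. (1 - p (Cmax (X \<omega>)) (X \<omega>)) * of_bool (Tmax I p (X \<omega>) \<ge> 1 - \<alpha>))"
        by (rule bnd_int[where K=1]) (use pG in \<open>auto intro!: borel_measurable_times borel_measurable_diff\<close>)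
      show "integrable M (\<lambda>\<omega>. \<alpha> * of_bool (Tmax I p (X \<omega>) \<ge> 1 - \<alpha>))"
        by (rule bnd_int[where K=1]) (use pG alpha in \<open>auto intro!: borel_measurable_times\<close>)
      show "(1 - p (Cmax (X \<omega>)) (X \<omega>)) * of_bool (Tmax I p (X \<omega>) \<ge> 1 - \<alpha>) \<le> \<alpha> * of_bool (Tmax I p (X \<omega>) \<ge> 1 - \<alpha>)"
        if "\<omega> \<in> space M" for \<omega> using TCm[OF that] by auto
    qed
    also have "\<dots> = \<alpha> * den" unfolding den_def by simp
    finally have le: "(\<integral>\<omega>. of_bool (Y \<omega> \<notin> Cmax (X \<omega>) \<and> Tmax I p (X \<omega>) \<ge> 1 - \<alpha>) \<partial>M) \<le> \<alpha> * den" .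
    show ?thesis
      unfolding mFCR_def Let_def den_def[symmetric]
      using le den0 alpha by (auto simp: pos_divide_le_eq)
  qed
  have part3: "G_obj M X p \<alpha> (\<lambda>x. Tmax I p x \<ge> 1 - \<alpha>) Cmax \<le> G_obj M X p \<alpha> D C"
    if pol: "policy MX I D C" for D C
  proof -
    note pD = pf[OF pol]
    show ?thesis unfolding G_obj_def
    proof (rule integral_mono)
      show "integrable M (\<lambda>\<omega>. (1 - p (Cmax (X \<omega>)) (X \<omega>) - \<alpha>) * of_bool (Tmax I p (X \<omega>) \<ge> 1 - \<alpha>))"
        by (rule bnd_int[where K=2]) (use pG alpha in \<open>auto intro!: borel_measurable_times borel_measurable_diff simp: abs_le_iff\<close>)
      show "integrable M (\<lambda>\<omega>. (1 - p (C (X \<omega>)) (X \<omega>) - \<alpha>) * of_bool (D (X \<omega>)))"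
        by (rule bnd_int[where K=2]) (use pD alpha in \<open>auto intro!: borel_measurable_times borel_measurable_diff simp: abs_le_iff\<close>)
      show "(1 - p (Cmax (X \<omega>)) (X \<omega>) - \<alpha>) * of_bool (Tmax I p (X \<omega>) \<ge> 1 - \<alpha>)
          \<le> (1 - p (C (X \<omega>)) (X \<omega>) - \<alpha>) * of_bool (D (X \<omega>))"
        if "\<omega> \<in> space M" for \<omega>
        using TCm[OF that] Tge[OF Xs[OF that], of "C (X \<omega>)"] pD that by auto
    qed
  qed
  have part4: "Pi_obj M X w p D C \<le> Pi_obj M X w p (\<lambda>x. Tmax I p x \<ge> 1 - \<alpha>) Cmax"
    if z: "measure M {\<omega> \<in> space M. Tmax I p (X \<omega>) > 1 - \<alpha>} = 0"
      and pol: "policy MX I D C" and fcr: "mFCR M X Y D C \<le> \<alpha>" for D C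
  proof -
    note pD = pf[OF pol]
    define f where "f \<omega> = (1 - \<alpha> - p (C (X \<omega>)) (X \<omega>)) * of_bool (D (X \<omega>))" for \<omega>
    define den where "den = (\<integral>\<omega>. (of_bool (D (X \<omega>))::real) \<partial>M)"
    define nm where "nm = (\<integral>\<omega>. (1 - p (C (X \<omega>)) (X \<omega>)) * of_bool (D (X \<omega>)) \<partial>M)"
    have den0: "den \<ge> 0" unfolding den_def by simp
    have intd: "integrable M (\<lambda>\<omega>. (of_bool (D (X \<omega>))::real))"
      by (rule bnd_int[where K=1]) (use pD in auto)
    have intpd: "integrable M (\<lambda>\<omega>. p (C (X \<omega>)) (X \<omega>) * of_bool (D (X \<omega>)))"
      by (rule bnd_int[where K=1]) (use pD in \<open>auto intro!: borel_measurable_times\<close>)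
    have intf: "integrable M f"
      unfolding f_def
      by (rule bnd_int[where K=2]) (use pD alpha in \<open>auto intro!: borel_measurable_times borel_measurable_diff simp: abs_le_iff\<close>)
    have nm_le: "nm \<le> den"
      unfolding nm_def den_def
      by (rule integral_mono) (use pD in \<open>auto intro!: bnd_int[where K=1] borel_measurable_times borel_measurable_diff intd\<close>)
    have "nm \<le> \<alpha> * den"
    proof (cases "den = 0")
      case True then show ?thesis using nm_le by simp
    next
      case False
      then have "den > 0" using den0 by simp
      moreover have "nm / den \<le> \<alpha>" using fcr False num[OF pol]
        unfolding mFCR_def Let_def den_def[symmetric] nm_def by simp
      ultimately show ?thesis by (simp add: pos_divide_le_eq mult.commute)
    qed
    moreover have "nm = den - (\<integral>\<omega>. p (C (X \<omega>)) (X \<omega>) * of_bool (D (X \<omega>)) \<partial>M)"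
      unfolding nm_def den_def
      by (subst Bochner_Integration.integral_diff[OF intd intpd, symmetric]) (auto simp: algebra_simps intro!: Bochner_Integration.integral_cong)
    moreover have "integral\<^sup>L M f = (1 - \<alpha>) * den - (\<integral>\<omega>. p (C (X \<omega>)) (X \<omega>) * of_bool (D (X \<omega>)) \<partial>M)"
    proof -
      have "(1 - \<alpha>) * den = (\<integral>\<omega>. (1 - \<alpha>) * of_bool (D (X \<omega>)) \<partial>M)"
        unfolding den_def by simp
      moreover have "integrable M (\<lambda>\<omega>. (1 - \<alpha>) * of_bool (D (X \<omega>)))"
        using intd by simp
      ultimately have "(1 - \<alpha>) * den - (\<integral>\<omega>. p (C (X \<omega>)) (X \<omega>) * of_bool (D (X \<omega>)) \<partial>M)
          = (\<integral>\<omega>. (1 - \<alpha>) * of_bool (D (X \<omega>)) - p (C (X \<omega>)) (X \<omega>) * of_bool (D (X \<omega>)) \<partial>M)"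
        using Bochner_Integration.integral_diff[OF _ intpd] by simp
      also have "\<dots> = integral\<^sup>L M f"
        unfolding f_def by (intro Bochner_Integration.integral_cong) (auto simp: algebra_simps)
      finally show ?thesis by simp
    qed
    ultimately have fle: "integral\<^sup>L M f \<le> 0" by (simp add: algebra_simps)
    have AEle: "AE \<omega> in M. Tmax I p (X \<omega>) \<le> 1 - \<alpha>"
    proof (subst AE_iff_measurable[OF _ refl])
      show "{\<omega> \<in> space M. \<not> Tmax I p (X \<omega>) \<le> 1 - \<alpha>} \<in> sets M" using TX by measurable
      show "emeasure M {\<omega> \<in> space M. \<not> Tmax I p (X \<omega>) \<le> 1 - \<alpha>} = 0"
        using z by (simp add: emeasure_eq_measure not_le)
    qed
    have fnn: "AE \<omega> in M. 0 \<le> f \<omega>"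
      using AEle
    proof (rule AE_mp, intro AE_I2 impI)
      fix \<omega> assume "\<omega> \<in> space M" "Tmax I p (X \<omega>) \<le> 1 - \<alpha>"
      then show "0 \<le> f \<omega>" unfolding f_def using Tge[OF Xs, of \<omega> "C (X \<omega>)"] pD by auto
    qed
    have "integral\<^sup>L M f \<ge> 0" using fnn by (rule integral_nonneg_AE)
    with fle have "integral\<^sup>L M f = 0" by simp
    then have f0: "AE \<omega> in M. f \<omega> = 0" using integral_nonneg_eq_0_iff_AE[OF intf fnn] by simp
    show ?thesis unfolding Pi_obj_def
    proof (rule integral_mono_AE)
      show "integrable M (\<lambda>\<omega>. w (C (X \<omega>)) * p (C (X \<omega>)) (X \<omega>) * of_bool (D (X \<omega>)))"
        by (rule bnd_int[where K=B]) (use pD in \<open>auto intro!: borel_measurable_times aux_bnd simp: abs_mult\<close>)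
      show "integrable M (\<lambda>\<omega>. w (Cmax (X \<omega>)) * p (Cmax (X \<omega>)) (X \<omega>) * of_bool (Tmax I p (X \<omega>) \<ge> 1 - \<alpha>))"
        by (rule bnd_int[where K=B]) (use pG in \<open>auto intro!: borel_measurable_times aux_bnd simp: abs_mult\<close>)
      show "AE \<omega> in M. w (C (X \<omega>)) * p (C (X \<omega>)) (X \<omega>) * of_bool (D (X \<omega>))
          \<le> w (Cmax (X \<omega>)) * p (Cmax (X \<omega>)) (X \<omega>) * of_bool (Tmax I p (X \<omega>) \<ge> 1 - \<alpha>)"
        using AEle f0 AE_space
      proof (eventually_elim)
        case (elim \<omega>)
        note pDw = pD[THEN conjunct2, THEN conjunct2, THEN conjunct2, rule_format, OF elim(3)]
        note pGw = pG[THEN conjunct2, THEN conjunct2, THEN conjunct2, rule_format, OF elim(3)]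
        show ?case
        proof (cases "D (X \<omega>)")
          case True
          then have e: "p (C (X \<omega>)) (X \<omega>) = 1 - \<alpha>" using elim(2) unfolding f_def by simp
          have T: "Tmax I p (X \<omega>) = p (C (X \<omega>)) (X \<omega>)"
            using Tge[OF Xs[OF elim(3)], of "C (X \<omega>)"] pDw elim(1) e by linarith
          have wle: "w (C (X \<omega>)) \<le> w (Cmax (X \<omega>))"
            using Cmax_tie[OF Xs[OF elim(3)], of "C (X \<omega>)"] pDw T by simp
          have "w (C (X \<omega>)) * p (C (X \<omega>)) (X \<omega>) \<le> w (Cmax (X \<omega>)) * p (C (X \<omega>)) (X \<omega>)"
            using wle pDw by (intro mult_right_mono) auto
          then show ?thesis using True T TCm[OF elim(3)] e by simp
        next
          case False
          then show ?thesis using pGw by simp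
        qed
      qed
    qed
  qed
  show ?thesis using polG part2 part3 part4 by blast
qed

end
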